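(* Let a WIFS satisfy the $\Phi$-FNC for an iteration rule $\Phi$. Then the map $\pi:\Omega^\infty\to K$ is Lipschitz with constant $1$ with respect to the metric $d$ on $\Omega^\infty$.
   Context: Setting. A weighted iterated function system (WIFS) $(S_i,p_i)_{i\in\mathcal I}$ consists of a finite index set $\mathcal I$, maps $S_i(x)=r_ix+d_i$ on $\mathbb R$ with $0<|r_i|<1$, and probabilities $p_i>0$ with $\sum_i p_i=1$. Its self-similar set $K$ is the unique nonempty compact set with $K=\bigcup_i S_i(K)$. Standing assumptions: $K$ is not a singleton and its convex hull is $[0,1]$. For a finite word $\sigma=\sigma_1\cdots\sigma_n$ over $\mathcal I$ (the set of all finite words, including the empty word, is $\mathcal I^*$) put $S_\sigma=S_{\sigma_1}\circ\cdots\circ S_{\sigma_n}$. Iteration rules and net intervals. Fix a total order on the affine bijections $x\mapsto ax+b$ ($a\ne0$) of $\mathbb R$. For a closed interval $J$ let $T_J(x)=rx+c$ ($r>0$) be the map with $T_J([0,1])=J$. An iteration rule $\Phi$ assigns to each finite strictly increasing tuple $v=(f_1,\dots,f_m)$ of such maps a tuple $\Phi(v)=(\mathcal C_1,\dots,\mathcal C_m)$ of finite subsets of $\mathcal I^*$ such that for each $i$ and all large $n$ every word of length $n$ has a unique prefix in $\mathcal C_i$. Children of a pair $(\Delta,v)$, $\Delta=[a,b]$: let $\mathcal Y=\{T_\Delta\circ f_i\circ S_\tau:1\le i\le m,\tau\in\mathcal C_i\}$ and list $\{a,b\}\cup\{g(z):g\in\mathcal Y,z\in\{0,1\},g(z)\in\Delta\}$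 as $a=y_1<\dots<y_{k+1}=b$; the children are the pairs $(\Delta',v')$ with $\Delta'=[y_j,y_{j+1}]$, $(y_j,y_{j+1})\cap K\ne\emptyset$, and $v'$ the increasing tuple of the distinct maps $T_{\Delta'}^{-1}\circ g$, $g\in\mathcal Y$, $g(K)\cap(y_j,y_{j+1})\ne\emptyset$. Let $\mathcal N_0=\{([0,1],(\mathrm{id}))\}$ and $\mathcal N_{n+1}$ the set of children of members of $\mathcal N_n$; for $(\Delta,v)\in\mathcal N_n$, $\Delta$ is a net interval of level $n$ with neighbour set $v$. $\Phi$ must also satisfy: (i) $\max\{r\,\mathrm{diam}\Delta:(\Delta,v)\in\mathcal N_n,(x\mapsto rx+c)\in v\}\to0$; (ii) if $f_1\neq f_2$ lie in a neighbour set then $f_1\circ S_\sigma\ne f_2$ for all $\sigma\in\mathcal I^*$. (Convention: a pair whose only child has the same interval is replaced by that child.) Transition graph. Children, their neighbour sets, relative positions and diameter ratios depend only on $v$. The transition graph $\mathcal G$ has as vertices the neighbour sets occurring, root $v_{\mathrm{root}}=(\mathrm{id})$, and one edge $e$ from $v$ to $v'$ for each child $(\Delta',v')$ of a pair $(\Delta,v)$ (distinguished by the relative position of $\Delta'$ in $\Delta$), with weight $W(e)=\mathrm{diam}\Delta'/\mathrm{diam}\Delta$; for a path $\eta=(e_1,\dots,e_n)$, $W(\eta)=\prod W(e_k)$. $\Omega^n,\Omega^\infty$ are the paths starting at $v_{\mathrm{root}}$ of length $n$, resp. infinite. Each $\eta\in\Omega^n$ corresponds bijectively to a net interval $\pi(\eta)$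 of level $n$ (following children), with $W(\eta)=\mathrm{diam}\,\pi(\eta)$. For $\gamma\in\Omega^\infty$, $\gamma|n$ is its length-$n$ prefix and $\pi(\gamma)$ is the unique point of $\bigcap_n\pi(\gamma|n)$. The WIFS satisfies the $\Phi$-FNC if $\mathcal G$ is finite. The metric on $\Omega^\infty$ is $d(\gamma_1,\gamma_2)=\inf\{W(\eta):\eta$ a common prefix of $\gamma_1$ and $\gamma_2\}$. *)

theory Defs
  imports "HOL-Analysis.Analysis" "HOL-Library.Sublist"
begin

text \<open>An affine map x \<mapsto> a x + b is represented by the pair (a, b) (with a \<noteq> 0).\<close>
type_synonym aff = "real \<times> real"

definition aff_app :: "aff \<Rightarrow> real \<Rightarrow> real" where
  "aff_app f x = fst f * x + snd f"

definition aff_comp :: "aff \<Rightarrow> aff \<Rightarrow> aff" where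
  "aff_comp f g = (fst f * fst g, fst f * snd g + snd f)"

definition aff_inv :: "aff \<Rightarrow> aff" where
  "aff_inv f = (1 / fst f, - snd f / fst f)"

definition aff_id :: aff where
  "aff_id = (1, 0)"

text \<open>T_J for J = [a,b] (a < b): the increasing affine map with T_J([0,1]) = J.\<close>
definition T_int :: "real \<Rightarrow> real \<Rightarrow> aff" where
  "T_int a b = (b - a, a)"

definition S_word :: "('i \<Rightarrow> real) \<Rightarrow> ('i \<Rightarrow> real) \<Rightarrow> 'i list \<Rightarrow> aff" where
  "S_word r d \<sigma> = foldr (\<lambda>i f. aff_comp (r i, d i) f) \<sigma> aff_id"

definition wifs :: "'i set \<Rightarrow> ('i \<Rightarrow> real) \<Rightarrow> ('i \<Rightarrow> real) \<Rightarrow> ('i \<Rightarrow> real) \<Rightarrow> bool" where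
  "wifs I r d p \<longleftrightarrow> finite I \<and> (\<forall>i\<in>I. 0 < \<bar>r i\<bar> \<and> \<bar>r i\<bar> < 1 \<and> 0 < p i) \<and> (\<Sum>i\<in>I. p i) = 1"

definition self_similar_set :: "'i set \<Rightarrow> ('i \<Rightarrow> real) \<Rightarrow> ('i \<Rightarrow> real) \<Rightarrow> real set \<Rightarrow> bool" where
  "self_similar_set I r d K \<longleftrightarrow> compact K \<and> K \<noteq> {} \<and> K = (\<Union>i\<in>I. (\<lambda>x. r i * x + d i) ` K)"

text \<open>A pair (Delta, v): Delta = [a,b] encoded as (a,b); v the neighbour set (a finite set of
  affine maps; the increasing tuple w.r.t. the fixed total order is determined by the set).
  An iteration rule Phi assigns to each neighbour set v and each f in v the finite set of words
  C_f = Phi v f.\<close>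
type_synonym pair = "(real \<times> real) \<times> aff set"

definition net_root :: pair where
  "net_root = ((0, 1), {aff_id})"

definition Y_maps :: "('i \<Rightarrow> real) \<Rightarrow> ('i \<Rightarrow> real) \<Rightarrow> (aff set \<Rightarrow> aff \<Rightarrow> 'i list set) \<Rightarrow> pair \<Rightarrow> aff set" where
  "Y_maps r d \<Phi> P = {aff_comp (T_int (fst (fst P)) (snd (fst P))) (aff_comp f (S_word r d \<tau>)) | f \<tau>.
                        f \<in> snd P \<and> \<tau> \<in> \<Phi> (snd P) f}"

definition cut_points :: "('i \<Rightarrow> real) \<Rightarrow> ('i \<Rightarrow> real) \<Rightarrow> (aff set \<Rightarrow> aff \<Rightarrow> 'i list set) \<Rightarrow> pair \<Rightarrow> real set" where
  "cut_points r d \<Phi> P = {fst (fst P), snd (fst P)} \<union>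
     {aff_app g z | g z. g \<in> Y_maps r d \<Phi> P \<and> z \<in> {0, 1} \<and> aff_app g z \<in> {fst (fst P) .. snd (fst P)}}"

definition children :: "('i \<Rightarrow> real) \<Rightarrow> ('i \<Rightarrow> real) \<Rightarrow> real set \<Rightarrow> (aff set \<Rightarrow> aff \<Rightarrow> 'i list set) \<Rightarrow> pair \<Rightarrow> pair set" where
  "children r d K \<Phi> P = {((c, e), v') | c e v'.
      c \<in> cut_points r d \<Phi> P \<and> e \<in> cut_points r d \<Phi> P \<and> c < e \<and>
      {c<..<e} \<inter> cut_points r d \<Phi> P = {} \<and> {c<..<e} \<inter> K \<noteq> {} \<and>
      v' = {aff_comp (aff_inv (T_int c e)) g | g. g \<in> Y_maps r d \<Phi> P \<and> aff_app g ` K \<inter> {c<..<e} \<noteq> {}}}"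

text \<open>Convention: a pair whose only child has the same interval is replaced by that child
  (repeatedly). reduces P Q: Q is the result of this replacement applied to P.\<close>
definition trivial_step :: "('i \<Rightarrow> real) \<Rightarrow> ('i \<Rightarrow> real) \<Rightarrow> real set \<Rightarrow> (aff set \<Rightarrow> aff \<Rightarrow> 'i list set) \<Rightarrow> pair \<Rightarrow> pair \<Rightarrow> bool" where
  "trivial_step r d K \<Phi> P Q \<longleftrightarrow> children r d K \<Phi> P = {Q} \<and> fst Q = fst P"

definition reduces :: "('i \<Rightarrow> real) \<Rightarrow> ('i \<Rightarrow> real) \<Rightarrow> real set \<Rightarrow> (aff set \<Rightarrow> aff \<Rightarrow> 'i list set) \<Rightarrow> pair \<Rightarrow> pair \<Rightarrow> bool" where
  "reduces r d K \<Phi> P Q \<longleftrightarrow> (\<exists>(n::nat) s. s 0 = P \<and> s n = Q \<and>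
       (\<forall>j<n. trivial_step r d K \<Phi> (s j) (s (Suc j))) \<and> \<not> (\<exists>Q'. trivial_step r d K \<Phi> Q Q'))"

definition net_child :: "('i \<Rightarrow> real) \<Rightarrow> ('i \<Rightarrow> real) \<Rightarrow> real set \<Rightarrow> (aff set \<Rightarrow> aff \<Rightarrow> 'i list set) \<Rightarrow> pair \<Rightarrow> pair \<Rightarrow> bool" where
  "net_child r d K \<Phi> P Q \<longleftrightarrow> (\<exists>P'\<in>children r d K \<Phi> P. reduces r d K \<Phi> P' Q)"

primrec net :: "('i \<Rightarrow> real) \<Rightarrow> ('i \<Rightarrow> real) \<Rightarrow> real set \<Rightarrow> (aff set \<Rightarrow> aff \<Rightarrow> 'i list set) \<Rightarrow> nat \<Rightarrow> pair set" where
  "net r d K \<Phi> 0 = {net_root}"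
| "net r d K \<Phi> (Suc n) = {Q. \<exists>P\<in>net r d K \<Phi> n. net_child r d K \<Phi> P Q}"

definition iteration_rule :: "'i set \<Rightarrow> ('i \<Rightarrow> real) \<Rightarrow> ('i \<Rightarrow> real) \<Rightarrow> real set \<Rightarrow> (aff set \<Rightarrow> aff \<Rightarrow> 'i list set) \<Rightarrow> bool" where
  "iteration_rule I r d K \<Phi> \<longleftrightarrow>
     (\<forall>v. finite v \<and> (\<forall>f\<in>v. fst f \<noteq> 0) \<longrightarrow>
        (\<forall>f\<in>v. finite (\<Phi> v f) \<and> \<Phi> v f \<subseteq> lists I \<and>
           (\<exists>N. \<forall>n\<ge>N. \<forall>w\<in>lists I. length w = n \<longrightarrow> (\<exists>!u. u \<in> \<Phi> v f \<and> prefix u w)))) \<and>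
     \<comment> \<open>(i): max of |r| diam Delta over (Delta,v) in N_n, (x \<mapsto> r x + c) in v, tends to 0\<close>
     (\<forall>\<epsilon>>0. \<exists>N. \<forall>n\<ge>N. \<forall>P\<in>net r d K \<Phi> n. \<forall>f\<in>snd P.
          \<bar>fst f\<bar> * (snd (fst P) - fst (fst P)) < \<epsilon>) \<and>
     \<comment> \<open>(ii)\<close>
     (\<forall>n. \<forall>P\<in>net r d K \<Phi> n. \<forall>f1\<in>snd P. \<forall>f2\<in>snd P. f1 \<noteq> f2 \<longrightarrow>
          (\<forall>\<sigma>\<in>lists I. aff_comp f1 (S_word r d \<sigma>) \<noteq> f2))"

text \<open>Phi-FNC: the transition graph is finite, i.e. only finitely many neighbour sets occur.\<close>
definition phi_FNC :: "('i \<Rightarrow> real) \<Rightarrow> ('i \<Rightarrow> real) \<Rightarrow> real set \<Rightarrow> (aff set \<Rightarrow> aff \<Rightarrow> 'i list set) \<Rightarrow> bool" where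
  "phi_FNC r d K \<Phi> \<longleftrightarrow> finite {v. \<exists>n \<Delta>. (\<Delta>, v) \<in> net r d K \<Phi> n}"

text \<open>An infinite path from the root in the transition graph is identified with the sequence
  of pairs (pi(gamma|n), neighbour set) it visits: gamma n is the n-th net interval.\<close>
definition Omega_inf :: "('i \<Rightarrow> real) \<Rightarrow> ('i \<Rightarrow> real) \<Rightarrow> real set \<Rightarrow> (aff set \<Rightarrow> aff \<Rightarrow> 'i list set) \<Rightarrow> (nat \<Rightarrow> pair) set" where
  "Omega_inf r d K \<Phi> = {\<gamma>. \<gamma> 0 = net_root \<and> (\<forall>n. net_child r d K \<Phi> (\<gamma> n) (\<gamma> (Suc n)))}"

definition interval_of :: "pair \<Rightarrow> real set" where
  "interval_of P = {fst (fst P) .. snd (fst P)}"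

definition diam_of :: "pair \<Rightarrow> real" where
  "diam_of P = snd (fst P) - fst (fst P)"

definition proj_pi :: "(nat \<Rightarrow> pair) \<Rightarrow> real" where
  "proj_pi \<gamma> = (THE x. \<forall>n. x \<in> interval_of (\<gamma> n))"

text \<open>W(gamma|n) = diam(pi(gamma|n)); gamma|n is a common prefix iff the paths agree up to step n.\<close>
definition path_dist :: "(nat \<Rightarrow> pair) \<Rightarrow> (nat \<Rightarrow> pair) \<Rightarrow> real" where
  "path_dist \<gamma>1 \<gamma>2 = Inf {diam_of (\<gamma>1 n) | n. \<forall>k\<le>n. \<gamma>1 k = \<gamma>2 k}"

end

theory Submission
  imports Defs
begin

lemma aff_app_comp: "aff_app (aff_comp f g) x = aff_app f (aff_app g x)"
  by (simp add: aff_app_def aff_comp_def algebra_simps)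

lemma fst_aff_comp: "fst (aff_comp f g) = fst f * fst g"
  by (simp add: aff_comp_def)

lemma aff_app_inv: "fst f \<noteq> 0 \<Longrightarrow> aff_app f (aff_app (aff_inv f) w) = w"
  by (simp add: aff_app_def aff_inv_def field_simps)

lemma S_word_Nil: "aff_app (S_word r d []) x = x"
  by (simp add: S_word_def aff_id_def aff_app_def)

lemma S_word_Cons: "S_word r d (i # w) = aff_comp (r i, d i) (S_word r d w)"
  by (simp add: S_word_def)

lemma S_word_append: "aff_app (S_word r d (u @ w)) x = aff_app (S_word r d u) (aff_app (S_word r d w) x)"
  by (induction u arbitrary: x) (simp_all add: S_word_Nil S_word_Cons aff_app_comp)

lemma S_word_single: "aff_app (S_word r d [i]) x = r i * x + d i"
  by (simp add: S_word_Cons aff_app_comp S_word_Nil) (simp add: aff_app_def)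

lemma S_word_slope: "(\<forall>i\<in>set w. r i \<noteq> 0) \<Longrightarrow> fst (S_word r d w) \<noteq> 0"
  by (induction w) (simp_all add: S_word_Cons fst_aff_comp S_word_def aff_id_def)

lemma S_word_K:
  assumes "self_similar_set I r d K" "w \<in> lists I" "y \<in> K"
  shows "aff_app (S_word r d w) y \<in> K"
  using assms(2,3)
proof (induction w arbitrary: y)
  case Nil then show ?case by (simp add: S_word_Nil)
next
  case (Cons i w)
  have "aff_app (S_word r d w) y \<in> K" using Cons by auto
  moreover have "i \<in> I" using Cons by simp
  moreover have "K = (\<Union>i\<in>I. (\<lambda>x. r i * x + d i) ` K)" using assms(1) unfolding self_similar_set_def by blast
  ultimately have "r i * aff_app (S_word r d w) y + d i \<in> K"
    by (metis (no_types, lifting) UN_I image_eqI)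
  then show ?case by (simp add: S_word_Cons aff_app_comp) (simp add: aff_app_def)
qed

lemma cover_len:
  assumes "self_similar_set I r d K" "x \<in> K"
  shows "\<exists>w\<in>lists I. length w = N \<and> (\<exists>y\<in>K. x = aff_app (S_word r d w) y)"
proof (induction N)
  case 0 then show ?case using assms(2) by (intro bexI[of _ "[]"]) (auto simp: S_word_Nil)
next
  case (Suc N)
  then obtain w y where w: "w \<in> lists I" "length w = N" "y \<in> K" "x = aff_app (S_word r d w) y" by blast
  from assms(1) w(3) obtain i z where iz: "i \<in> I" "z \<in> K" "y = r i * z + d i"
    unfolding self_similar_set_def by blast
  have "x = aff_app (S_word r d (w @ [i])) z" using w iz by (simp add: S_word_append S_word_single)
  then show ?case using w iz by (intro bexI[of _ "w @ [i]"]) auto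
qed

lemma cover_code:
  assumes "self_similar_set I r d K" "x \<in> K" "C \<subseteq> lists I"
    and "\<exists>N. \<forall>n\<ge>N. \<forall>w\<in>lists I. length w = n \<longrightarrow> (\<exists>!u. u \<in> C \<and> prefix u w)"
  shows "\<exists>\<tau>\<in>C. \<exists>z\<in>K. x = aff_app (S_word r d \<tau>) z"
proof -
  obtain N where N: "\<forall>n\<ge>N. \<forall>w\<in>lists I. length w = n \<longrightarrow> (\<exists>!u. u \<in> C \<and> prefix u w)" using assms(4) by blast
  obtain w y where w: "w \<in> lists I" "length w = N" "y \<in> K" "x = aff_app (S_word r d w) y"
    using cover_len[OF assms(1,2)] by blast
  obtain u where u: "u \<in> C" "prefix u w" using N w by blast
  then obtain w' where w': "w = u @ w'" by (auto simp: prefix_def)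
  have "w' \<in> lists I" using w(1) w' by auto
  then have "aff_app (S_word r d w') y \<in> K" using S_word_K[OF assms(1)] w(3) by blast
  moreover have "x = aff_app (S_word r d u) (aff_app (S_word r d w') y)" using w w' by (simp add: S_word_append)
  ultimately show ?thesis using u by blast
qed


definition inv_pair :: "real set \<Rightarrow> pair \<Rightarrow> bool" where
  "inv_pair K P \<longleftrightarrow> fst (fst P) < snd (fst P) \<and> finite (snd P) \<and> (\<forall>f\<in>snd P. fst f \<noteq> 0) \<and>
     (\<forall>x\<in>K \<inter> {fst (fst P)<..<snd (fst P)}. \<exists>f\<in>snd P. \<exists>y\<in>K.
        x = aff_app (T_int (fst (fst P)) (snd (fst P))) (aff_app f y)) \<and>
     (\<exists>f\<in>snd P. 1 \<le> \<bar>fst f\<bar>)"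

lemma affine_between:
  fixes g :: aff and z c e :: real
  assumes "0 \<le> z" "z \<le> 1" "aff_app g z \<in> {c<..<e}"
    "aff_app g 0 \<notin> {c<..<e}" "aff_app g 1 \<notin> {c<..<e}"
  shows "e - c \<le> \<bar>fst g\<bar>"
proof -
  obtain s t where g: "g = (s, t)" by (cases g)
  have "s * z \<ge> min 0 s" "s * z \<le> max 0 s"
  proof -
    show "s * z \<ge> min 0 s"
    proof (cases "s \<ge> 0")
      case True then show ?thesis using assms(1) by simp
    next
      case False then have "s * z \<ge> s * 1" using assms(2) by (intro mult_left_mono_neg) auto
      then show ?thesis by simp
    qed
    show "s * z \<le> max 0 s"
    proof (cases "s \<ge> 0")
      case True then have "s * z \<le> s * 1" using assms(2) by (intro mult_left_mono) auto
      then show ?thesis by simp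
    next
      case False then show ?thesis using assms(1) by (simp add: mult_nonneg_nonpos2 mult_le_0_iff)
    qed
  qed
  then have m: "s * z \<ge> min 0 s" "s * z \<le> max 0 s" by auto
  have h: "t \<le> c \<or> e \<le> t" "s + t \<le> c \<or> e \<le> s + t" "c < s * z + t" "s * z + t < e"
    using assms(3-5) unfolding g aff_app_def by auto
  show ?thesis
  proof (cases "0 \<le> s")
    case True
    then have "0 \<le> s * z" "s * z \<le> s" using m by auto
    then show ?thesis unfolding g using h True by (simp only: fst_conv abs_of_nonneg[OF True]) linarith
  next
    case False
    then have "s \<le> s * z" "s * z \<le> 0" using m by auto
    then show ?thesis unfolding g using h False by (simp only: fst_conv abs_of_neg[of s] not_le[symmetric] False) linarith
  qed
qed

lemma child_inv:
  assumes ss: "self_similar_set I r d K" and wf: "wifs I r d p" and K01: "K \<subseteq> {0..1}"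
    and ir: "iteration_rule I r d K \<Phi>" and inv: "inv_pair K P"
    and Q: "Q \<in> children r d K \<Phi> P"
  shows "inv_pair K Q \<and> fst (fst P) \<le> fst (fst Q) \<and> snd (fst Q) \<le> snd (fst P)"
proof -
  obtain a b v where P: "P = ((a, b), v)" by (metis prod.collapse)
  define Y where "Y = Y_maps r d \<Phi> P"
  define CP where "CP = cut_points r d \<Phi> P"
  obtain c e v' where Q': "Q = ((c, e), v')" and cC: "c \<in> CP" and eC: "e \<in> CP" and ce: "c < e"
    and gap: "{c<..<e} \<inter> CP = {}" and Kce: "{c<..<e} \<inter> K \<noteq> {}"
    and v': "v' = {aff_comp (aff_inv (T_int c e)) g | g. g \<in> Y \<and> aff_app g ` K \<inter> {c<..<e} \<noteq> {}}"
    using Q unfolding children_def Y_def CP_def by blast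
  have ab: "a < b" "finite v" "\<forall>f\<in>v. fst f \<noteq> 0"
    and cov: "\<forall>x\<in>K \<inter> {a<..<b}. \<exists>f\<in>v. \<exists>y\<in>K. x = aff_app (T_int a b) (aff_app f y)"
    using inv unfolding inv_pair_def P by auto
  have CPsub: "CP \<subseteq> {a..b}" using ab(1) unfolding CP_def cut_points_def P by auto
  have ce_ab: "a \<le> c" "e \<le> b" using CPsub cC eC by auto
  have R: "\<forall>v. finite v \<and> (\<forall>f\<in>v. fst f \<noteq> 0) \<longrightarrow>
        (\<forall>f\<in>v. finite (\<Phi> v f) \<and> \<Phi> v f \<subseteq> lists I \<and>
           (\<exists>N. \<forall>n\<ge>N. \<forall>w\<in>lists I. length w = n \<longrightarrow> (\<exists>!u. u \<in> \<Phi> v f \<and> prefix u w)))"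
    using ir unfolding iteration_rule_def by (rule conjunct1)
  have rule: "\<forall>f\<in>v. finite (\<Phi> v f) \<and> \<Phi> v f \<subseteq> lists I \<and>
           (\<exists>N. \<forall>n\<ge>N. \<forall>w\<in>lists I. length w = n \<longrightarrow> (\<exists>!u. u \<in> \<Phi> v f \<and> prefix u w))"
    using mp[OF spec[OF R, of v] conjI[OF ab(2) ab(3)]] .
  have Y_eq: "Y = (\<lambda>(f, \<tau>). aff_comp (T_int a b) (aff_comp f (S_word r d \<tau>))) ` (SIGMA f:v. \<Phi> v f)"
    unfolding Y_def Y_maps_def P by auto
  have finY: "finite Y" unfolding Y_eq using ab(2) rule by auto
  have rI: "\<forall>i\<in>I. r i \<noteq> 0" using wf unfolding wifs_def by auto
  have Yslope: "fst g \<noteq> 0" if gY: "g \<in> Y" for g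
  proof -
    obtain f \<tau> where "f \<in> v" "\<tau> \<in> \<Phi> v f" "g = aff_comp (T_int a b) (aff_comp f (S_word r d \<tau>))"
      using gY unfolding Y_def Y_maps_def P by (simp only: fst_conv snd_conv mem_Collect_eq) blast
    moreover have "\<tau> \<in> lists I" using rule calculation by blast
    then have "fst (S_word r d \<tau>) \<noteq> 0" using rI by (intro S_word_slope) auto
    ultimately show ?thesis using ab by (simp add: fst_aff_comp T_int_def)
  qed
  have key: "\<exists>g\<in>Y. \<exists>z\<in>K. x = aff_app g z" if "x \<in> K" "x \<in> {c<..<e}" for x
  proof -
    have "x \<in> K \<inter> {a<..<b}" using that ce_ab by auto
    then obtain f y where fy: "f \<in> v" "y \<in> K" "x = aff_app (T_int a b) (aff_app f y)" using cov by blast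
    note rf = bspec[OF rule fy(1)]
    obtain \<tau> z where tz: "\<tau> \<in> \<Phi> v f" "z \<in> K" "y = aff_app (S_word r d \<tau>) z"
      using cover_code[OF ss fy(2) conjunct1[OF conjunct2[OF rf]] conjunct2[OF conjunct2[OF rf]]] by blast
    have "aff_comp (T_int a b) (aff_comp f (S_word r d \<tau>)) \<in> Y" unfolding Y_eq using fy tz by auto
    moreover have "x = aff_app (aff_comp (T_int a b) (aff_comp f (S_word r d \<tau>))) z"
      using fy tz by (simp add: aff_app_comp)
    ultimately show ?thesis using tz by blast
  qed
  have Tce: "fst (T_int c e) \<noteq> 0" using ce by (simp add: T_int_def)
  have "v' \<subseteq> (\<lambda>g. aff_comp (aff_inv (T_int c e)) g) ` Y" unfolding v' by blast
  then have finv': "finite v'" using finY finite_subset by blast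
  have slv': "\<forall>f\<in>v'. fst f \<noteq> 0"
  proof
    fix f assume "f \<in> v'"
    then obtain g where g: "g \<in> Y" "f = aff_comp (aff_inv (T_int c e)) g" unfolding v' by blast
    have "fst g \<noteq> 0" using Yslope g(1) .
    then show "fst f \<noteq> 0" using ce unfolding g(2) by (simp add: fst_aff_comp aff_inv_def T_int_def)
  qed
  have covv': "\<forall>x\<in>K \<inter> {c<..<e}. \<exists>f\<in>v'. \<exists>y\<in>K. x = aff_app (T_int c e) (aff_app f y)"
  proof
    fix x assume x: "x \<in> K \<inter> {c<..<e}"
    then obtain g z where gz: "g \<in> Y" "z \<in> K" "x = aff_app g z" using key by blast
    then have "aff_comp (aff_inv (T_int c e)) g \<in> v'" unfolding v' using x by blast
    moreover have "x = aff_app (T_int c e) (aff_app (aff_comp (aff_inv (T_int c e)) g) z)"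
      using gz Tce by (simp add: aff_app_comp aff_app_inv)
    ultimately show "\<exists>f\<in>v'. \<exists>y\<in>K. x = aff_app (T_int c e) (aff_app f y)" using gz by blast
  qed
  have big: "\<exists>f\<in>v'. 1 \<le> \<bar>fst f\<bar>"
  proof -
    obtain x where x: "x \<in> K" "x \<in> {c<..<e}" using Kce by blast
    then obtain g z where gz: "g \<in> Y" "z \<in> K" "x = aff_app g z" using key by blast
    have notin: "aff_app g t \<notin> {c<..<e}" if "t \<in> {0, 1}" for t
    proof
      assume t: "aff_app g t \<in> {c<..<e}"
      then have gab: "aff_app g t \<in> {a..b}" using ce_ab by auto
      have "aff_app g t \<in> CP" unfolding CP_def cut_points_def P fst_conv snd_conv using gz(1) that gab unfolding Y_def P by blast
      then show False using gap t by blast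
    qed
    have "e - c \<le> \<bar>fst g\<bar>" using affine_between[of z g c e] gz K01 x notin by auto
    moreover have f': "aff_comp (aff_inv (T_int c e)) g \<in> v'" unfolding v' using x gz by blast
    moreover have "\<bar>fst (aff_comp (aff_inv (T_int c e)) g)\<bar> = \<bar>fst g\<bar> / (e - c)"
      using ce by (simp add: fst_aff_comp aff_inv_def T_int_def abs_mult)
    ultimately show ?thesis using ce by (metis le_divide_eq_1_pos diff_gt_0_iff_gt)
  qed
  show ?thesis unfolding inv_pair_def Q' P using ce finv' slv' covv' big ce_ab by auto
qed


lemma net_child_inv:
  assumes ss: "self_similar_set I r d K" and wf: "wifs I r d p" and K01: "K \<subseteq> {0..1}"
    and ir: "iteration_rule I r d K \<Phi>" and inv: "inv_pair K P"
    and nc: "net_child r d K \<Phi> P Q"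
  shows "inv_pair K Q \<and> fst (fst P) \<le> fst (fst Q) \<and> snd (fst Q) \<le> snd (fst P)"
proof -
  obtain P' where P': "P' \<in> children r d K \<Phi> P" "reduces r d K \<Phi> P' Q"
    using nc unfolding net_child_def by blast
  obtain n s where s: "s 0 = P'" "s n = Q" "\<forall>j<n. trivial_step r d K \<Phi> (s j) (s (Suc j))"
    using P'(2) unfolding reduces_def by blast
  have "j \<le> n \<Longrightarrow> inv_pair K (s j) \<and> fst (fst P) \<le> fst (fst (s j)) \<and> snd (fst (s j)) \<le> snd (fst P)" for j
  proof (induction j)
    case 0 then show ?case using child_inv[OF ss wf K01 ir inv P'(1)] s(1) by simp
  next
    case (Suc j)
    then have IH: "inv_pair K (s j) \<and> fst (fst P) \<le> fst (fst (s j)) \<and> snd (fst (s j)) \<le> snd (fst P)" by simp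
    have "s (Suc j) \<in> children r d K \<Phi> (s j)" using s(3) Suc.prems unfolding trivial_step_def by auto
    from child_inv[OF ss wf K01 ir _ this] IH show ?case by auto
  qed
  from this[of n] show ?thesis using s(2) by simp
qed

lemma root_inv: "inv_pair K net_root"
  unfolding inv_pair_def net_root_def
  by (auto simp: aff_id_def aff_app_def T_int_def)

lemma path_facts:
  assumes ss: "self_similar_set I r d K" and wf: "wifs I r d p" and K01: "K \<subseteq> {0..1}"
    and ir: "iteration_rule I r d K \<Phi>" and g: "\<gamma> \<in> Omega_inf r d K \<Phi>"
  shows "\<forall>n. inv_pair K (\<gamma> n) \<and> \<gamma> n \<in> net r d K \<Phi> n \<and>
           fst (fst (\<gamma> n)) \<le> fst (fst (\<gamma> (Suc n))) \<and> snd (fst (\<gamma> (Suc n))) \<le> snd (fst (\<gamma> n))"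
proof
  fix n
  have g0: "\<gamma> 0 = net_root" and gs: "\<And>n. net_child r d K \<Phi> (\<gamma> n) (\<gamma> (Suc n))"
    using g unfolding Omega_inf_def by auto
  have A: "inv_pair K (\<gamma> n) \<and> \<gamma> n \<in> net r d K \<Phi> n" for n
  proof (induction n)
    case 0 then show ?case using g0 root_inv by simp
  next
    case (Suc n) then show ?case using net_child_inv[OF ss wf K01 ir _ gs[of n]] gs[of n] by auto
  qed
  show "inv_pair K (\<gamma> n) \<and> \<gamma> n \<in> net r d K \<Phi> n \<and>
           fst (fst (\<gamma> n)) \<le> fst (fst (\<gamma> (Suc n))) \<and> snd (fst (\<gamma> (Suc n))) \<le> snd (fst (\<gamma> n))"
    using A[of n] net_child_inv[OF ss wf K01 ir _ gs[of n]] by auto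
qed

lemma path_point:
  assumes ss: "self_similar_set I r d K" and wf: "wifs I r d p" and K01: "K \<subseteq> {0..1}"
    and ir: "iteration_rule I r d K \<Phi>" and g: "\<gamma> \<in> Omega_inf r d K \<Phi>"
  shows "\<forall>n. proj_pi \<gamma> \<in> interval_of (\<gamma> n)"
proof -
  define a where "a n = fst (fst (\<gamma> n))" for n
  define b where "b n = snd (fst (\<gamma> n))" for n
  have F: "\<forall>n. inv_pair K (\<gamma> n) \<and> \<gamma> n \<in> net r d K \<Phi> n \<and> a n \<le> a (Suc n) \<and> b (Suc n) \<le> b n"
    using path_facts[OF ss wf K01 ir g] unfolding a_def b_def by blast
  have ab: "a n < b n" for n using F unfolding inv_pair_def a_def b_def by blast
  have small: "\<exists>N. \<forall>n\<ge>N. b n - a n < \<epsilon>" if epos: "\<epsilon> > 0" for \<epsilon>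
  proof -
    obtain N where N: "\<forall>n\<ge>N. \<forall>P\<in>net r d K \<Phi> n. \<forall>f\<in>snd P. \<bar>fst f\<bar> * (snd (fst P) - fst (fst P)) < \<epsilon>"
      using conjunct1[OF conjunct2[OF ir[unfolded iteration_rule_def]]] epos by blast
    have "b n - a n < \<epsilon>" if "n \<ge> N" for n
    proof -
      have "inv_pair K (\<gamma> n)" using F by blast
      then obtain f where f: "f \<in> snd (\<gamma> n)" "1 \<le> \<bar>fst f\<bar>" unfolding inv_pair_def by blast
      have "\<bar>fst f\<bar> * (b n - a n) < \<epsilon>" using N that F f(1) unfolding a_def b_def by blast
      moreover have "1 * (b n - a n) \<le> \<bar>fst f\<bar> * (b n - a n)"
        using f(2) ab[of n] by (intro mult_right_mono) auto
      ultimately show ?thesis by simp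
    qed
    then show ?thesis by blast
  qed
  have lim: "(\<lambda>n. a n - b n) \<longlonglongrightarrow> 0"
  proof (rule LIMSEQ_I)
    fix \<epsilon> :: real assume "0 < \<epsilon>"
    then obtain N where "\<forall>n\<ge>N. b n - a n < \<epsilon>" using small by blast
    then show "\<exists>no. \<forall>n\<ge>no. norm (a n - b n - 0) < \<epsilon>" using ab by (auto intro!: exI[of _ N] simp: less_imp_le)
  qed
  obtain l where l: "\<forall>n. a n \<le> l" "\<forall>n. l \<le> b n"
    using nested_sequence_unique[of a b] F ab lim by (auto simp: less_imp_le)
  have uniq: "y = l" if "\<forall>n. y \<in> interval_of (\<gamma> n)" for y
  proof (rule ccontr)
    assume "y \<noteq> l"
    then have "\<bar>y - l\<bar> > 0" by simp
    then obtain n where "b n - a n < \<bar>y - l\<bar>" using small by blast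
    moreover have "y \<in> {a n..b n}" using that unfolding interval_of_def a_def b_def by blast
    ultimately show False using l[rule_format, of n] by auto
  qed
  have ex1: "\<exists>!x. \<forall>n. x \<in> interval_of (\<gamma> n)"
  proof (rule ex1I[of _ l])
    show "\<forall>n. l \<in> interval_of (\<gamma> n)" using l unfolding interval_of_def a_def b_def by simp
  next
    fix y assume "\<forall>n. y \<in> interval_of (\<gamma> n)" then show "y = l" by (rule uniq)
  qed
  show ?thesis unfolding proj_pi_def using theI'[OF ex1] by blast
qed

theorem lemma5p1:
  fixes I :: "'i set" and r d p :: "'i \<Rightarrow> real" and K :: "real set"
    and \<Phi> :: "aff set \<Rightarrow> aff \<Rightarrow> 'i list set"
  assumes "wifs I r d p"
    and "self_similar_set I r d K"
    and "\<not> (\<exists>x. K = {x})"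
    and "convex hull K = {0..1}"
    and "iteration_rule I r d K \<Phi>"
    and "phi_FNC r d K \<Phi>"
  shows "\<forall>\<gamma>1\<in>Omega_inf r d K \<Phi>. \<forall>\<gamma>2\<in>Omega_inf r d K \<Phi>.
           \<bar>proj_pi \<gamma>1 - proj_pi \<gamma>2\<bar> \<le> 1 * path_dist \<gamma>1 \<gamma>2"
proof (intro ballI)
  fix \<gamma>1 \<gamma>2 assume g1: "\<gamma>1 \<in> Omega_inf r d K \<Phi>" and g2: "\<gamma>2 \<in> Omega_inf r d K \<Phi>"
  have K01: "K \<subseteq> {0..1}" using hull_subset[of K convex] assms(4) by simp
  note p1 = path_point[OF assms(2,1) K01 assms(5) g1]
  note p2 = path_point[OF assms(2,1) K01 assms(5) g2]
  have "\<bar>proj_pi \<gamma>1 - proj_pi \<gamma>2\<bar> \<le> Inf {diam_of (\<gamma>1 n) | n. \<forall>k\<le>n. \<gamma>1 k = \<gamma>2 k}"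
  proof (rule cInf_greatest)
    have "\<gamma>1 0 = \<gamma>2 0" using g1 g2 unfolding Omega_inf_def by simp
    then show "{diam_of (\<gamma>1 n) | n. \<forall>k\<le>n. \<gamma>1 k = \<gamma>2 k} \<noteq> {}" by auto
  next
    fix x assume "x \<in> {diam_of (\<gamma>1 n) | n. \<forall>k\<le>n. \<gamma>1 k = \<gamma>2 k}"
    then obtain n where n: "x = diam_of (\<gamma>1 n)" "\<gamma>1 n = \<gamma>2 n" by auto
    have "proj_pi \<gamma>1 \<in> interval_of (\<gamma>1 n)" "proj_pi \<gamma>2 \<in> interval_of (\<gamma>1 n)"
      using p1 p2 n(2) by metis+
    then show "\<bar>proj_pi \<gamma>1 - proj_pi \<gamma>2\<bar> \<le> x"
      unfolding n(1) interval_of_def diam_of_def by auto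
  qed
  then show "\<bar>proj_pi \<gamma>1 - proj_pi \<gamma>2\<bar> \<le> 1 * path_dist \<gamma>1 \<gamma>2" unfolding path_dist_def by simp
qed

end
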